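(* There exists $\delta>0$ such that the family of NSG-compositions $x_1+\cdots+x_{m-1}$ with maximum $4$ whose last maximal part $x_l=4$ (i.e. $x_l=4$ and $x_i\le3$ for $i>l$) satisfies $m-1-l\le\delta(m-1)$ has growth-rate strictly smaller than $\omega=\frac{1+\sqrt5}2$.
   Context: An NSG-composition is a composition $x_1+\cdots+x_{m-1}$ of positive integers satisfying $x_{s+t}\le x_s+x_t$ and $x_{m-s-t}\le x_{m-s}+x_{m-t}+1$ for all $s,t\ge1$, $s+t<m$ (equivalently, the Kunz vector of a numerical semigroup of multiplicity $m$); its genus is $\sum x_j$. The growth-rate of a family is $\limsup_{g\to\infty}a_g^{1/g}$ with $a_g$ the number of members of genus $g$. *)

theory Defs
  imports Complex_Main "HOL-Library.Liminf_Limsup" "HOL-Library.Extended_Real"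
begin

text \<open>A composition x_1+...+x_{m-1} is represented by the list xs of its parts,
  so m = length xs + 1 and x_j = xs ! (j - 1) for 1 <= j <= m-1.\<close>

definition nsg_comp :: "nat list \<Rightarrow> bool" where
  "nsg_comp xs \<longleftrightarrow>
     (\<forall>v\<in>set xs. 0 < v) \<and>
     (let m = length xs + 1; x = (\<lambda>j. xs ! (j - 1)) in
        \<forall>s t. 1 \<le> s \<and> 1 \<le> t \<and> s + t < m \<longrightarrow>
          x (s + t) \<le> x s + x t \<and> x (m - s - t) \<le> x (m - s) + x (m - t) + 1)"

definition genus :: "nat list \<Rightarrow> nat" where
  "genus xs = sum_list xs"

definition count_genus :: "nat list set \<Rightarrow> nat \<Rightarrow> nat" where
  "count_genus F g = card {xs \<in> F. genus xs = g}"

definition growth_rate :: "nat list set \<Rightarrow> ereal" where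
  "growth_rate F = limsup (\<lambda>g. ereal (root g (real (count_genus F g))))"

definition fam_max4 :: "real \<Rightarrow> nat list set" where
  "fam_max4 \<delta> = {xs. nsg_comp xs \<and> (\<forall>v\<in>set xs. v \<le> 4) \<and>
     (\<exists>l. 1 \<le> l \<and> l \<le> length xs \<and> xs ! (l - 1) = 4 \<and>
          (\<forall>i. l < i \<and> i \<le> length xs \<longrightarrow> xs ! (i - 1) \<le> 3) \<and>
          real (length xs - l) \<le> \<delta> * real (length xs))}"

end

theory Submission
  imports Defs "HOL-Real_Asymp.Real_Asymp"
begin

definition St :: "(nat \<times> nat) set" where
  "St = {(1,3),(1,4),(2,2),(2,3),(2,4),(3,1),(3,2),(3,3),(3,4),(4,1),(4,2),(4,3),(4,4)}"

lemma St_iff: "(a,b) \<in> St \<longleftrightarrow> 1 \<le> a \<and> a \<le> 4 \<and> 1 \<le> b \<and> b \<le> 4 \<and> 4 \<le> a + b"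
proof
  assume "(a,b) \<in> St" thus "1 \<le> a \<and> a \<le> 4 \<and> 1 \<le> b \<and> b \<le> 4 \<and> 4 \<le> a + b"
    unfolding St_def by auto
next
  assume h: "1 \<le> a \<and> a \<le> 4 \<and> 1 \<le> b \<and> b \<le> 4 \<and> 4 \<le> a + b"
  hence "a = 1 \<or> a = 2 \<or> a = 3 \<or> a = 4" "b = 1 \<or> b = 2 \<or> b = 3 \<or> b = 4" by auto
  thus "(a,b) \<in> St" using h unfolding St_def by (elim disjE) simp_all
qed

lemma finite_St: "finite St" unfolding St_def by simp

definition pw :: "nat \<times> nat \<Rightarrow> real" where "pw p = (5/8) ^ (fst p + snd p)"
definition hh :: "nat \<times> nat \<Rightarrow> real" where
  "hh p = (if p \<in> {(3,1),(3,2),(4,1),(4,2)} then 5/4 else 1)"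
definition okp :: "nat \<times> nat \<Rightarrow> nat \<times> nat \<Rightarrow> bool" where
  "okp q p \<longleftrightarrow> fst p \<le> fst q + 1 \<and> snd q \<le> snd p + 1"

lemma hh_ge1: "1 \<le> hh p" unfolding hh_def by auto

lemma trans_ineq:
  assumes "q \<in> St"
  shows "(\<Sum>p\<in>St. if okp q p then pw p * hh p else 0) \<le> hh q"
  using assms unfolding St_def
  by (auto simp: okp_def pw_def hh_def power_divide)

lemma A_ineq: "(\<Sum>p\<in>St. if 2 \<le> fst p then pw p * hh p else 0) \<le> 1"
  unfolding St_def by (simp add: pw_def hh_def power_divide)

lemma A1_ineq: "(\<Sum>p\<in>St. if fst p = 1 then pw p * hh p else 0) \<le> 1"
  unfolding St_def by (simp add: pw_def hh_def power_divide)

definition valid :: "nat \<Rightarrow> (nat \<times> nat) list \<Rightarrow> bool" where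
  "valid d ps \<longleftrightarrow> set ps \<subseteq> St \<and> (\<forall>i<length ps. Suc i < d \<longrightarrow> 2 \<le> fst (ps!i)) \<and>
     (\<forall>i<length ps. Suc i = d \<longrightarrow> fst (ps!i) = 1) \<and>
     (\<forall>i. i + d < length ps \<longrightarrow> okp (ps!i) (ps!(i+d)))"

definition wt :: "(nat \<times> nat) list \<Rightarrow> real" where
  "wt ps = (5/8) ^ sum_list (map (\<lambda>p. fst p + snd p) ps)"

definition Psi :: "nat \<Rightarrow> (nat \<times> nat) list \<Rightarrow> real" where
  "Psi d ps = prod_list (map hh (drop (length ps - d) ps))"

definition VV :: "nat \<Rightarrow> nat \<Rightarrow> (nat \<times> nat) list set" where
  "VV d L = {ps. length ps = L \<and> valid d ps}"

lemma finite_VV: "finite (VV d L)"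
  by (rule finite_subset[OF _ finite_lists_length_eq[OF finite_St, of L]]) (auto simp: VV_def valid_def)

lemma prod_list_ge1: "(\<forall>x\<in>set xs. (1::real) \<le> x) \<Longrightarrow> 1 \<le> prod_list xs"
proof (induction xs)
  case Nil thus ?case by simp
next
  case (Cons x xs)
  hence "1 \<le> x" "1 \<le> prod_list xs" by auto
  hence "1 * 1 \<le> x * prod_list xs" by (intro mult_mono) auto
  thus ?case by simp
qed

lemma Psi_ge1: "1 \<le> Psi d ps"
  unfolding Psi_def by (rule prod_list_ge1) (auto simp: hh_ge1)

lemma wt_nonneg: "0 \<le> wt ps" unfolding wt_def by simp

lemma wt_snoc: "wt (ps @ [p]) = wt ps * pw p"
  unfolding wt_def pw_def by (simp add: power_add)

lemma filt: "(\<Sum>p\<in>{p\<in>St. P p}. f p) = (\<Sum>p\<in>St. if P p then f p else 0)"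
  using sum.inter_filter[OF finite_St] by simp

definition CC :: "nat \<Rightarrow> nat \<Rightarrow> (nat \<times> nat) list \<Rightarrow> nat \<times> nat \<Rightarrow> bool" where
  "CC d L ps p \<longleftrightarrow> (Suc L < d \<longrightarrow> 2 \<le> fst p) \<and> (Suc L = d \<longrightarrow> fst p = 1) \<and>
     (d \<le> L \<longrightarrow> okp (ps!(L-d)) p)"

lemma snoc_valid:
  assumes "valid d (ps @ [p])" "1 \<le> d"
  shows "valid d ps \<and> p \<in> St \<and> CC d (length ps) ps p"
proof -
  let ?L = "length ps"
  have a: "set ps \<subseteq> St" "p \<in> St" using assms(1) unfolding valid_def by auto
  have b: "\<forall>i<?L. Suc i < d \<longrightarrow> 2 \<le> fst (ps!i)"
  proof (intro allI impI)
    fix i assume "i < ?L" "Suc i < d"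
    thus "2 \<le> fst (ps!i)" using assms(1) unfolding valid_def
      by (metis length_append_singleton less_SucI nth_append_left)
  qed
  have c: "\<forall>i<?L. Suc i = d \<longrightarrow> fst (ps!i) = 1"
  proof (intro allI impI)
    fix i assume "i < ?L" "Suc i = d"
    thus "fst (ps!i) = 1" using assms(1) unfolding valid_def
      by (metis length_append_singleton less_SucI nth_append_left)
  qed
  have e: "\<forall>i. i + d < ?L \<longrightarrow> okp (ps!i) (ps!(i+d))"
  proof (intro allI impI)
    fix i assume h: "i + d < ?L"
    hence "i + d < length (ps @ [p])" by simp
    hence "okp ((ps@[p])!i) ((ps@[p])!(i+d))" using assms(1) unfolding valid_def by blast
    moreover have "(ps@[p])!i = ps!i" "(ps@[p])!(i+d) = ps!(i+d)" using h by (auto simp: nth_append)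
    ultimately show "okp (ps!i) (ps!(i+d))" by simp
  qed
  have f1: "Suc ?L < d \<longrightarrow> 2 \<le> fst p"
    using assms(1) unfolding valid_def by (metis length_append_singleton lessI nth_append_length)
  have f2: "Suc ?L = d \<longrightarrow> fst p = 1"
    using assms(1) unfolding valid_def by (metis length_append_singleton lessI nth_append_length)
  have f3: "d \<le> ?L \<longrightarrow> okp (ps!(?L-d)) p"
  proof
    assume h: "d \<le> ?L"
    hence "(?L - d) + d < length (ps @ [p])" by simp
    hence "okp ((ps@[p])!(?L-d)) ((ps@[p])!(?L - d + d))" using assms(1) unfolding valid_def by blast
    moreover have "(ps@[p])!(?L-d) = ps!(?L-d)" using h assms(2) by (auto simp: nth_append)
    moreover have "(ps@[p])!(?L - d + d) = p" using h by simp
    ultimately show "okp (ps!(?L-d)) p" by simp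
  qed
  show ?thesis using a b c e f1 f2 f3 unfolding valid_def CC_def by auto
qed

lemma inner_bound:
  assumes "ps \<in> VV d L" "1 \<le> d"
  shows "(\<Sum>p\<in>{p\<in>St. CC d L ps p}. wt (ps@[p]) * Psi d (ps@[p])) \<le> wt ps * Psi d ps"
proof -
  have len: "length ps = L" and vps: "valid d ps" using assms(1) unfolding VV_def by auto
  show ?thesis
  proof (cases "d \<le> L")
    case True
    define q where "q = ps!(L-d)"
    define R where "R = prod_list (map hh (drop (Suc (L-d)) ps))"
    have qS: "q \<in> St" using vps len True assms(2) unfolding valid_def q_def
      by (metis diff_less less_le_trans nth_mem subsetD zero_less_one)
    have P1: "Psi d ps = hh q * R"
    proof -
      have "drop (L-d) ps = q # drop (Suc (L-d)) ps" unfolding q_def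
        using Cons_nth_drop_Suc[of "L-d" ps] len True assms(2) by simp
      thus ?thesis unfolding Psi_def R_def using len by simp
    qed
    have P2: "Psi d (ps@[p]) = R * hh p" for p
    proof -
      have "drop (Suc L - d) (ps@[p]) = drop (Suc (L-d)) ps @ [p]"
        using len True assms(2) by (simp add: Suc_diff_le)
      thus ?thesis unfolding Psi_def R_def using len by simp
    qed
    have CCeq: "CC d L ps p = okp q p" for p
      unfolding CC_def q_def using True by auto
    have "(\<Sum>p\<in>{p\<in>St. CC d L ps p}. wt (ps@[p]) * Psi d (ps@[p]))
        = (\<Sum>p\<in>{p\<in>St. okp q p}. (wt ps * R) * (pw p * hh p))"
      by (rule sum.cong) (auto simp: CCeq wt_snoc P2 algebra_simps)
    also have "\<dots> = (wt ps * R) * (\<Sum>p\<in>St. if okp q p then pw p * hh p else 0)"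
      unfolding filt sum_distrib_left by (rule sum.cong) auto
    also have "\<dots> \<le> (wt ps * R) * hh q"
      apply (rule mult_left_mono[OF trans_ineq[OF qS]])
      using wt_nonneg[of ps] prod_list_ge1[of "map hh (drop (Suc (L-d)) ps)"]
      by (auto simp: R_def hh_ge1)
    also have "\<dots> = wt ps * Psi d ps" using P1 by simp
    finally show ?thesis .
  next
    case False
    have P2: "Psi d (ps@[p]) = Psi d ps * hh p" for p
      unfolding Psi_def using len False by simp
    define Q where "Q = (\<lambda>p::nat\<times>nat. if Suc L < d then 2 \<le> fst p else fst p = 1)"
    have CCeq: "CC d L ps p = Q p" for p
      unfolding CC_def Q_def using False by auto
    have Qb: "(\<Sum>p\<in>St. if Q p then pw p * hh p else 0) \<le> 1"
      unfolding Q_def using A_ineq A1_ineq by (cases "Suc L < d") auto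
    have "(\<Sum>p\<in>{p\<in>St. CC d L ps p}. wt (ps@[p]) * Psi d (ps@[p]))
        = (\<Sum>p\<in>{p\<in>St. Q p}. (wt ps * Psi d ps) * (pw p * hh p))"
      by (rule sum.cong) (auto simp: CCeq wt_snoc P2 algebra_simps)
    also have "\<dots> = (wt ps * Psi d ps) * (\<Sum>p\<in>St. if Q p then pw p * hh p else 0)"
      unfolding filt sum_distrib_left by (rule sum.cong) auto
    also have "\<dots> \<le> (wt ps * Psi d ps) * 1"
      apply (rule mult_left_mono[OF Qb])
      using wt_nonneg[of ps] Psi_ge1[of d ps] by simp
    finally show ?thesis by simp
  qed
qed

lemma SL: "1 \<le> d \<Longrightarrow> (\<Sum>ps\<in>VV d L. wt ps * Psi d ps) \<le> 1"
proof (induction L)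
  case 0
  have "VV d 0 = {[]}" unfolding VV_def valid_def by auto
  thus ?case by (simp add: wt_def Psi_def)
next
  case (Suc L)
  define g where "g = (\<lambda>x::(nat\<times>nat) list \<times> (nat\<times>nat). fst x @ [snd x])"
  define SS where "SS = (SIGMA ps:VV d L. {p\<in>St. CC d L ps p})"
  define F where "F = (\<lambda>ps. wt ps * Psi d ps)"
  have finSS: "finite SS" unfolding SS_def using finite_VV finite_St by auto
  have sub: "VV d (Suc L) \<subseteq> g ` SS"
  proof
    fix ps' assume h: "ps' \<in> VV d (Suc L)"
    hence len: "length ps' = Suc L" and v: "valid d ps'" unfolding VV_def by auto
    hence eq: "ps' = butlast ps' @ [last ps']"
      by (metis append_butlast_last_id list.size(3) nat.distinct(1))
    have "valid d (butlast ps') \<and> last ps' \<in> St \<and> CC d (length (butlast ps')) (butlast ps') (last ps')"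
      using snoc_valid[of d "butlast ps'" "last ps'"] v eq Suc.prems by simp
    moreover have "length (butlast ps') = L" using len by simp
    ultimately have "(butlast ps', last ps') \<in> SS" unfolding SS_def VV_def by auto
    thus "ps' \<in> g ` SS" using eq unfolding g_def by force
  qed
  have inj: "inj_on g SS" unfolding g_def inj_on_def by auto
  have "(\<Sum>ps\<in>VV d (Suc L). F ps) \<le> (\<Sum>ps\<in>g ` SS. F ps)"
    by (rule sum_mono2[OF finite_imageI[OF finSS] sub])
       (auto simp: F_def intro!: mult_nonneg_nonneg wt_nonneg order_trans[OF _ Psi_ge1])
  also have "\<dots> = (\<Sum>x\<in>SS. F (g x))" using sum.reindex[OF inj] by simp
  also have "\<dots> = (\<Sum>ps\<in>VV d L. \<Sum>p\<in>{p\<in>St. CC d L ps p}. F (ps @ [p]))"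
    unfolding SS_def g_def
    by (subst sum.Sigma) (auto simp: finite_VV finite_St case_prod_beta)
  also have "\<dots> \<le> (\<Sum>ps\<in>VV d L. F ps)"
    by (rule sum_mono) (use inner_bound Suc.prems in \<open>auto simp: F_def\<close>)
  also have "\<dots> \<le> 1" using Suc.IH Suc.prems unfolding F_def by simp
  finally show ?case unfolding F_def .
qed

lemma VV_wt: "1 \<le> d \<Longrightarrow> (\<Sum>ps\<in>VV d L. wt ps) \<le> 1"
proof -
  assume d: "1 \<le> d"
  have "(\<Sum>ps\<in>VV d L. wt ps) \<le> (\<Sum>ps\<in>VV d L. wt ps * Psi d ps)"
  proof (rule sum_mono)
    fix ps show "wt ps \<le> wt ps * Psi d ps"
      using mult_left_mono[OF Psi_ge1[of d ps] wt_nonneg[of ps]] by simp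
  qed
  also have "\<dots> \<le> 1" using SL[OF d] .
  finally show ?thesis .
qed


definition pairsof :: "nat list \<Rightarrow> nat \<Rightarrow> (nat \<times> nat) list" where
  "pairsof xs l = map (\<lambda>i. (xs!i, xs!(l-2-i))) [0..<(l-1) div 2]"

definition midl :: "nat list \<Rightarrow> nat \<Rightarrow> nat list" where
  "midl xs l = (if odd (l-1) then [xs!((l-1) div 2)] else [])"

lemma nsg_sub:
  assumes "nsg_comp xs" "(i+1)+(j+1) \<le> length xs"
  shows "xs!(i+j+1) \<le> xs!i + xs!j"
proof -
  have "\<forall>s t. 1 \<le> s \<and> 1 \<le> t \<and> s + t < length xs + 1 \<longrightarrow>
          xs!(s+t-1) \<le> xs!(s-1) + xs!(t-1)"
    using assms(1) unfolding nsg_comp_def Let_def by blast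
  from this[rule_format, of "i+1" "j+1"] assms(2) show ?thesis by simp
qed

lemma nsg_pos: "nsg_comp xs \<Longrightarrow> v \<in> set xs \<Longrightarrow> 0 < v"
  unfolding nsg_comp_def by auto

lemma pairsof_nth: "i < (l-1) div 2 \<Longrightarrow> pairsof xs l ! i = (xs!i, xs!(l-2-i))"
  unfolding pairsof_def by simp

lemma length_pairsof: "length (pairsof xs l) = (l-1) div 2"
  unfolding pairsof_def by simp

lemma pairs_valid_d:
  assumes nsg: "nsg_comp xs" and le4: "\<forall>v\<in>set xs. v \<le> 4" and ln: "l \<le> length xs" "1 \<le> l"
    and x4: "xs!(l-1) = 4" and d1: "1 \<le> d"
    and lt: "\<forall>i<(l-1) div 2. Suc i < d \<longrightarrow> xs!i \<noteq> 1"
    and one: "d \<le> (l-1) div 2 \<longrightarrow> xs!(d-1) = 1"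
  shows "pairsof xs l \<in> VV d ((l-1) div 2)"
proof -
  let ?L = "(l-1) div 2"
  let ?ps = "pairsof xs l"
  have bnd: "1 \<le> xs!k \<and> xs!k \<le> 4" if "k < length xs" for k
    using nsg_pos[OF nsg, of "xs!k"] le4 that by (auto simp: Suc_le_eq)
  have S: "set ?ps \<subseteq> St"
  proof
    fix p assume "p \<in> set ?ps"
    then obtain i where i: "i < ?L" "p = ?ps ! i" by (auto simp: in_set_conv_nth length_pairsof)
    hence p: "p = (xs!i, xs!(l-2-i))" by (simp add: pairsof_nth)
    have F: "xs!(i + (l-2-i) + 1) \<le> xs!i + xs!(l-2-i)"
      by (rule nsg_sub[OF nsg]) (use i ln in linarith)
    have eq: "i + (l-2-i) + 1 = l - 1" using i by linarith
    from F have "xs!(l-1) \<le> xs!i + xs!(l-2-i)" by (simp only: eq)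
    hence "4 \<le> xs!i + xs!(l-2-i)" using x4 by simp
    moreover have "i < length xs" "l-2-i < length xs" using i ln by linarith+
    ultimately show "p \<in> St" using p bnd by (simp add: St_iff)
  qed
  have A: "\<forall>i<length ?ps. Suc i < d \<longrightarrow> 2 \<le> fst (?ps!i)"
  proof (intro allI impI)
    fix i assume h: "i < length ?ps" "Suc i < d"
    hence "i < ?L" by (simp add: length_pairsof)
    have "i < length xs" using \<open>i < ?L\<close> ln by linarith
    hence "xs!i \<noteq> 1" "1 \<le> xs!i" using lt h bnd[of i] \<open>i < ?L\<close> by auto
    thus "2 \<le> fst (?ps!i)" using \<open>i < ?L\<close> by (simp add: pairsof_nth)
  qed
  have B: "\<forall>i<length ?ps. Suc i = d \<longrightarrow> fst (?ps!i) = 1"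
  proof (intro allI impI)
    fix i assume h: "i < length ?ps" "Suc i = d"
    hence "i < ?L" by (simp add: length_pairsof)
    moreover have "xs!i = 1" using one h \<open>i < ?L\<close> by (metis Suc_leI diff_Suc_1)
    ultimately show "fst (?ps!i) = 1" by (simp add: pairsof_nth)
  qed
  have C: "\<forall>i. i + d < length ?ps \<longrightarrow> okp (?ps!i) (?ps!(i+d))"
  proof (intro allI impI)
    fix i assume h: "i + d < length ?ps"
    hence h2: "i + d < ?L" by (simp add: length_pairsof)
    hence xd: "xs!(d-1) = 1" using one by simp
    have F1: "xs!(i + (d-1) + 1) \<le> xs!i + xs!(d-1)"
      by (rule nsg_sub[OF nsg]) (use h2 ln d1 in linarith)
    have eq1: "i + (d-1) + 1 = i + d" using d1 by simp
    from F1 have c1: "xs!(i+d) \<le> xs!i + 1" by (simp only: eq1 xd)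
    have F2: "xs!((l-2-(i+d)) + (d-1) + 1) \<le> xs!(l-2-(i+d)) + xs!(d-1)"
      by (rule nsg_sub[OF nsg]) (use h2 ln d1 in linarith)
    have eq2: "(l-2-(i+d)) + (d-1) + 1 = l-2-i" using d1 h2 by linarith
    from F2 have c2: "xs!(l-2-i) \<le> xs!(l-2-(i+d)) + 1" by (simp only: eq2 xd)
    have "i < ?L" using h2 by simp
    thus "okp (?ps!i) (?ps!(i+d))" using h2 c1 c2 by (simp add: pairsof_nth okp_def)
  qed
  show ?thesis unfolding VV_def valid_def using S A B C by (simp add: length_pairsof)
qed

lemma pairs_valid:
  assumes nsg: "nsg_comp xs" and le4: "\<forall>v\<in>set xs. v \<le> 4" and ln: "l \<le> length xs" "1 \<le> l"
    and x4: "xs!(l-1) = 4"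
  shows "pairsof xs l \<in> (\<Union>d\<in>{1..Suc ((l-1) div 2)}. VV d ((l-1) div 2))"
proof (cases "\<exists>k<(l-1) div 2. xs!k = 1")
  case True
  define k where "k = (LEAST k. k < (l-1) div 2 \<and> xs!k = 1)"
  have k: "k < (l-1) div 2" "xs!k = 1" using LeastI_ex[OF True] unfolding k_def by auto
  have kmin: "\<forall>i<(l-1) div 2. Suc i < Suc k \<longrightarrow> xs!i \<noteq> 1"
    using not_less_Least unfolding k_def by fastforce
  have "pairsof xs l \<in> VV (Suc k) ((l-1) div 2)"
    by (rule pairs_valid_d[OF nsg le4 ln x4]) (use k kmin in auto)
  thus ?thesis using k by auto
next
  case False
  have "pairsof xs l \<in> VV (Suc ((l-1) div 2)) ((l-1) div 2)"
    by (rule pairs_valid_d[OF nsg le4 ln x4]) (use False in auto)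
  thus ?thesis by auto
qed


lemma pair_sum_le:
  assumes "l \<le> length xs" "1 \<le> l"
  shows "sum_list (map (\<lambda>p. fst p + snd p) (pairsof xs l)) \<le> sum_list xs"
proof -
  let ?L = "(l-1) div 2"
  define I2 where "I2 = (\<lambda>i. l-2-i) ` {0..<?L}"
  have "sum_list (map (\<lambda>p. fst p + snd p) (pairsof xs l)) = (\<Sum>i\<in>{0..<?L}. xs!i + xs!(l-2-i))"
    unfolding pairsof_def by (simp add: interv_sum_list_conv_sum_set_nat comp_def)
  also have "\<dots> = (\<Sum>i\<in>{0..<?L}. xs!i) + (\<Sum>i\<in>{0..<?L}. xs!(l-2-i))"
    by (simp add: sum.distrib)
  also have "(\<Sum>i\<in>{0..<?L}. xs!(l-2-i)) = (\<Sum>j\<in>I2. xs!j)"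
  proof -
    have "inj_on (\<lambda>i. l-2-i) {0..<?L}" unfolding inj_on_def by auto
    thus ?thesis unfolding I2_def by (simp add: sum.reindex)
  qed
  also have "(\<Sum>i\<in>{0..<?L}. xs!i) + (\<Sum>j\<in>I2. xs!j) = (\<Sum>j\<in>{0..<?L} \<union> I2. xs!j)"
    by (rule sum.union_disjoint[symmetric]) (auto simp: I2_def)
  also have "\<dots> \<le> (\<Sum>j\<in>{0..<length xs}. xs!j)"
    by (rule sum_mono2) (use assms in \<open>auto simp: I2_def\<close>)
  also have "\<dots> = sum_list xs" by (simp add: sum_list_sum_nth)
  finally show ?thesis .
qed

lemma inj_phi:
  assumes "1 \<le> l" "l \<le> n"
  shows "inj_on (\<lambda>xs. (pairsof xs l, midl xs l, drop l xs)) {xs. length xs = n \<and> xs!(l-1) = 4}"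
proof (rule inj_onI)
  fix xs ys
  assume xs: "xs \<in> {xs. length xs = n \<and> xs!(l-1) = 4}" and ys: "ys \<in> {xs. length xs = n \<and> xs!(l-1) = 4}"
    and eq: "(pairsof xs l, midl xs l, drop l xs) = (pairsof ys l, midl ys l, drop l ys)"
  let ?L = "(l-1) div 2"
  have P: "pairsof xs l = pairsof ys l" and M: "midl xs l = midl ys l" and D: "drop l xs = drop l ys"
    using eq by auto
  have Pn: "xs!i = ys!i \<and> xs!(l-2-i) = ys!(l-2-i)" if "i < ?L" for i
    using arg_cong[OF P, of "\<lambda>ps. ps!i"] that by (simp add: pairsof_nth)
  show "xs = ys"
  proof (rule nth_equalityI)
    show "length xs = length ys" using xs ys by simp
  next
    fix j assume j: "j < length xs"
    have par: "l - 1 = 2*?L \<or> l - 1 = 2*?L + 1" by presburger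
    have "j < ?L \<or> (?L \<le> j \<and> j < l - 1 \<and> l-2-j < ?L) \<or> (j = ?L \<and> odd (l-1))
      \<or> j = l - 1 \<or> l \<le> j"
    proof (cases "j < ?L \<or> l \<le> j \<or> j = l - 1 \<or> l-2-j < ?L")
      case True thus ?thesis using assms by linarith
    next
      case False
      hence "j = ?L" "l - 1 = 2*?L + 1" using par assms by linarith+
      moreover have "odd (l-1)" using \<open>l - 1 = 2*?L + 1\<close> by presburger
      ultimately show ?thesis by blast
    qed
    then consider (a) "j < ?L" | (b) "?L \<le> j" "j < l - 1" "l-2-j < ?L" | (c) "j = ?L" "odd (l-1)"
      | (d) "j = l - 1" | (e) "l \<le> j" by blast
    thus "xs!j = ys!j"
    proof cases
      case a thus ?thesis using Pn by blast
    next
      case b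
      have "l-2-(l-2-j) = j" using b by linarith
      thus ?thesis using Pn[OF b(3)] by simp
    next
      case c thus ?thesis using M unfolding midl_def by simp
    next
      case d thus ?thesis using xs ys by simp
    next
      case e
      have "xs!j = drop l xs ! (j - l)" "ys!j = drop l ys ! (j - l)" using e j xs ys by auto
      thus ?thesis using D by simp
    qed
  qed
qed

lemma sum_UN_le_nonneg:
  fixes f :: "'a \<Rightarrow> real"
  assumes "finite I" "\<forall>i\<in>I. finite (A i)" "\<forall>x. 0 \<le> f x"
  shows "(\<Sum>x\<in>(\<Union>i\<in>I. A i). f x) \<le> (\<Sum>i\<in>I. \<Sum>x\<in>A i. f x)"
  using assms
proof (induction I rule: finite_induct)
  case empty thus ?case by simp
next
  case (insert i I)
  have fU: "finite (\<Union>i\<in>I. A i)" using insert by auto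
  have "(\<Sum>x\<in>(\<Union>i\<in>insert i I. A i). f x) = (\<Sum>x\<in>A i \<union> (\<Union>i\<in>I. A i). f x)" by simp
  also have "\<dots> = (\<Sum>x\<in>A i. f x) + (\<Sum>x\<in>(\<Union>i\<in>I. A i). f x) - (\<Sum>x\<in>A i \<inter> (\<Union>i\<in>I. A i). f x)"
    by (rule sum_Un) (use insert fU in auto)
  also have "\<dots> \<le> (\<Sum>x\<in>A i. f x) + (\<Sum>x\<in>(\<Union>i\<in>I. A i). f x)"
    using sum_nonneg[of "A i \<inter> (\<Union>i\<in>I. A i)" f] insert.prems by auto
  also have "\<dots> \<le> (\<Sum>x\<in>A i. f x) + (\<Sum>i\<in>I. \<Sum>x\<in>A i. f x)" using insert by auto
  also have "\<dots> = (\<Sum>i\<in>insert i I. \<Sum>x\<in>A i. f x)" using insert by simp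
  finally show ?case .
qed

definition SS :: "nat \<Rightarrow> nat \<Rightarrow> nat \<Rightarrow> nat list set" where
  "SS n l g = {xs. length xs = n \<and> nsg_comp xs \<and> (\<forall>v\<in>set xs. v \<le> 4) \<and> xs!(l-1) = 4 \<and>
      (\<forall>i. l < i \<and> i \<le> n \<longrightarrow> xs!(i-1) \<le> 3) \<and> genus xs = g}"

lemma card_SS:
  assumes l: "1 \<le> l" "l \<le> n"
  shows "real (card (SS n l g)) * (5/8)^g \<le> real (Suc ((l-1) div 2)) * (5 * 3^(n-l))"
proof -
  let ?L = "(l-1) div 2"
  define phi where "phi = (\<lambda>xs. (pairsof xs l, midl xs l, drop l xs))"
  define U where "U = (\<Union>d\<in>{1..Suc ?L}. VV d ?L)"
  define M where "M = {[],[1],[2],[3],[4::nat]}"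
  define T where "T = {ts. set ts \<subseteq> {1,2,3::nat} \<and> length ts = n - l}"
  have finS: "finite (SS n l g)"
    by (rule finite_subset[OF _ finite_lists_length_eq[of "{0..4::nat}" n]])
       (auto simp: SS_def)
  have finU: "finite U" unfolding U_def using finite_VV by auto
  have finMT: "finite (M \<times> T)" unfolding M_def T_def
    by (rule finite_cartesian_product[OF _ finite_lists_length_eq]) auto
  have cM: "card M = 5" unfolding M_def by simp
  have cT: "card T = 3^(n-l)" unfolding T_def using card_lists_length_eq[of "{1,2,3::nat}" "n-l"] by (simp add: numeral_3_eq_3)
  have injS: "inj_on phi (SS n l g)"
    unfolding phi_def by (rule inj_on_subset[OF inj_phi[OF l]]) (auto simp: SS_def)
  have img: "phi ` SS n l g \<subseteq> U \<times> (M \<times> T)"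
  proof
    fix y assume "y \<in> phi ` SS n l g"
    then obtain xs where xs: "xs \<in> SS n l g" "y = phi xs" by auto
    have len: "length xs = n" and nsg: "nsg_comp xs" and le4: "\<forall>v\<in>set xs. v \<le> 4"
      and x4: "xs!(l-1) = 4" and tl: "\<forall>i. l < i \<and> i \<le> n \<longrightarrow> xs!(i-1) \<le> 3"
      using xs(1) unfolding SS_def by auto
    have "pairsof xs l \<in> U" unfolding U_def using pairs_valid[OF nsg le4 _ l(1) x4] len l by simp
    moreover have "midl xs l \<in> M"
    proof (cases "odd (l-1)")
      case True
      have k: "(l-1) div 2 < length xs" using len l by linarith
      hence "xs!((l-1) div 2) \<in> set xs" by simp
      hence "0 < xs!((l-1) div 2)" "xs!((l-1) div 2) \<le> 4" using nsg_pos[OF nsg] le4 by auto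
      hence "xs!((l-1) div 2) \<in> {1,2,3,4}" by auto
      thus ?thesis using True unfolding midl_def M_def by auto
    next
      case False thus ?thesis unfolding midl_def M_def by simp
    qed
    moreover have "drop l xs \<in> T"
    proof -
      have "set (drop l xs) \<subseteq> {1,2,3}"
      proof
        fix v assume "v \<in> set (drop l xs)"
        then obtain k where k: "k < length (drop l xs)" "v = drop l xs ! k" by (auto simp: in_set_conv_nth)
        hence v: "v = xs!(l+k)" "l + k < n" using len l by auto
        hence "xs!(Suc (l+k) - 1) \<le> 3" using tl[rule_format, of "Suc (l+k)"] by simp
        moreover have "0 < v" using nsg_pos[OF nsg] v len by auto
        ultimately show "v \<in> {1,2,3}" using v by auto
      qed
      thus ?thesis unfolding T_def using len by simp
    qed
    ultimately show "y \<in> U \<times> (M \<times> T)" using xs(2) unfolding phi_def by simp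
  qed
  have "real (card (SS n l g)) * (5/8)^g = (\<Sum>xs\<in>SS n l g. (5/8::real)^g)" by simp
  also have "\<dots> \<le> (\<Sum>xs\<in>SS n l g. wt (fst (phi xs)))"
  proof (rule sum_mono)
    fix xs assume xs: "xs \<in> SS n l g"
    hence "sum_list (map (\<lambda>p. fst p + snd p) (pairsof xs l)) \<le> g"
      using pair_sum_le[of l xs] l unfolding SS_def genus_def by auto
    thus "(5/8::real)^g \<le> wt (fst (phi xs))" unfolding wt_def phi_def
      by (intro power_decreasing) auto
  qed
  also have "\<dots> = (\<Sum>y\<in>phi ` SS n l g. wt (fst y))"
    using sum.reindex[OF injS, of "\<lambda>y. wt (fst y)"] by simp
  also have "\<dots> \<le> (\<Sum>y\<in>U \<times> (M \<times> T). wt (fst y))"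
    by (rule sum_mono2[OF _ img]) (use finU finMT wt_nonneg in auto)
  also have "\<dots> = (\<Sum>a\<in>U. \<Sum>b\<in>M \<times> T. wt a)"
    by (subst sum.cartesian_product) (simp add: case_prod_beta)
  also have "\<dots> = (\<Sum>a\<in>U. wt a) * (5 * 3^(n-l))"
    by (simp add: sum_distrib_right card_cartesian_product cM cT mult.commute)
  also have "\<dots> \<le> real (Suc ?L) * (5 * 3^(n-l))"
  proof (rule mult_right_mono)
    have "(\<Sum>a\<in>U. wt a) \<le> (\<Sum>d\<in>{1..Suc ?L}. \<Sum>a\<in>VV d ?L. wt a)"
      unfolding U_def by (rule sum_UN_le_nonneg) (auto simp: finite_VV wt_nonneg)
    also have "\<dots> \<le> (\<Sum>d\<in>{1..Suc ?L}. (1::real))"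
      by (rule sum_mono) (auto intro: VV_wt)
    finally show "(\<Sum>a\<in>U. wt a) \<le> real (Suc ?L)" by simp
  qed simp
  finally show ?thesis .
qed


lemma length_le_sum: "(\<forall>v\<in>set xs. 0 < (v::nat)) \<Longrightarrow> length xs \<le> sum_list xs"
  by (induction xs) (auto simp: Suc_le_eq)

lemma card_bound:
  fixes \<delta> :: real
  assumes dpos: "0 \<le> \<delta>"
  shows "real (card {xs \<in> fam_max4 \<delta>. genus xs = g})
           \<le> real (Suc g) * real (Suc g) * (real (Suc g) * 5 * 3 powr (\<delta> * g) * (8/5)^g)"
proof -
  define SD where "SD = (\<lambda>n l. SS n l g \<inter> {xs. real (n - l) \<le> \<delta> * real n})"
  define c where "c = real (Suc g) * 5 * 3 powr (\<delta> * g) * (8/5)^g"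
  have c0: "0 \<le> c" unfolding c_def by simp
  have finSS: "finite (SS n l g)" for n l
    by (rule finite_subset[OF _ finite_lists_length_eq[of "{0..4::nat}" n]]) (auto simp: SS_def)
  have sub: "{xs \<in> fam_max4 \<delta>. genus xs = g} \<subseteq> (\<Union>n\<in>{..g}. \<Union>l\<in>{1..n}. SD n l)"
  proof
    fix xs assume h: "xs \<in> {xs \<in> fam_max4 \<delta>. genus xs = g}"
    then obtain l where l: "1 \<le> l" "l \<le> length xs" "xs ! (l - 1) = 4"
      "\<forall>i. l < i \<and> i \<le> length xs \<longrightarrow> xs ! (i - 1) \<le> 3"
      "real (length xs - l) \<le> \<delta> * real (length xs)"
      unfolding fam_max4_def by auto
    have nsg: "nsg_comp xs" and le4: "\<forall>v\<in>set xs. v \<le> 4" and gg: "genus xs = g"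
      using h unfolding fam_max4_def by auto
    have "length xs \<le> g" using length_le_sum[of xs] nsg_pos[OF nsg] gg unfolding genus_def by auto
    moreover have "xs \<in> SD (length xs) l" unfolding SD_def SS_def using l nsg le4 gg by auto
    ultimately show "xs \<in> (\<Union>n\<in>{..g}. \<Union>l\<in>{1..n}. SD n l)" using l by auto
  qed
  have finU: "finite (\<Union>n\<in>{..g}. \<Union>l\<in>{1..n}. SD n l)" unfolding SD_def using finSS by auto
  have cSD: "real (card (SD n l)) \<le> c" if "n \<le> g" "1 \<le> l" "l \<le> n" for n l
  proof (cases "SD n l = {}")
    case True thus ?thesis using c0 by simp
  next
    case False
    hence dl: "real (n - l) \<le> \<delta> * real n" unfolding SD_def by auto
    have "real (card (SD n l)) \<le> real (card (SS n l g))"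
      unfolding SD_def by (simp add: card_mono finSS)
    moreover have "real (card (SS n l g)) * (5/8)^g \<le> real (Suc ((l-1) div 2)) * (5 * 3^(n-l))"
      using card_SS that by simp
    moreover have "real (Suc ((l-1) div 2)) \<le> real (Suc g)" using that by simp
    moreover have "(3::real)^(n-l) \<le> 3 powr (\<delta> * g)"
    proof -
      have "(3::real)^(n-l) = 3 powr (real (n-l))" by (simp add: powr_realpow)
      also have "\<dots> \<le> 3 powr (\<delta> * g)"
      proof (intro powr_mono)
        have "\<delta> * real n \<le> \<delta> * real g" using that dpos by (intro mult_left_mono) auto
        thus "real (n - l) \<le> \<delta> * real g" using dl by linarith
      qed simp
      finally show ?thesis .
    qed
    ultimately have "real (card (SS n l g)) * (5/8)^g \<le> real (Suc g) * (5 * 3 powr (\<delta> * g))"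
      by (smt (verit, best) mult_mono of_nat_0_le_iff zero_le_power)
    hence "real (card (SS n l g)) \<le> real (Suc g) * (5 * 3 powr (\<delta> * g)) * (8/5)^g"
      by (simp add: field_simps power_divide)
    thus ?thesis using \<open>real (card (SD n l)) \<le> real (card (SS n l g))\<close> unfolding c_def
      by (simp add: algebra_simps)
  qed
  have "real (card {xs \<in> fam_max4 \<delta>. genus xs = g}) \<le> real (card (\<Union>n\<in>{..g}. \<Union>l\<in>{1..n}. SD n l))"
    using card_mono[OF finU sub] by simp
  also have "\<dots> \<le> real (\<Sum>n\<in>{..g}. card (\<Union>l\<in>{1..n}. SD n l))"
    by (intro of_nat_mono card_UN_le) simp
  also have "\<dots> \<le> real (\<Sum>n\<in>{..g}. \<Sum>l\<in>{1..n}. card (SD n l))"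
    by (intro of_nat_mono sum_mono card_UN_le) simp
  also have "\<dots> = (\<Sum>n\<in>{..g}. \<Sum>l\<in>{1..n}. real (card (SD n l)))" by simp
  also have "\<dots> \<le> (\<Sum>n\<in>{..g}. \<Sum>l\<in>{1..n}. c)"
    by (intro sum_mono cSD) auto
  also have "\<dots> \<le> (\<Sum>n\<in>{..g}. real (Suc g) * c)"
    by (intro sum_mono) (use c0 in \<open>auto intro: mult_right_mono\<close>)
  also have "\<dots> = real (Suc g) * real (Suc g) * c" by simp
  finally show ?thesis unfolding c_def .
qed


lemma pow_powr_inv:
  assumes "0 < (x::real)" "0 < n"
  shows "(x^n) powr (1/real n) = x"
proof -
  have "x^n = x powr (real n)" using assms(1) by (simp add: powr_realpow)
  hence "(x^n) powr (1/real n) = x powr (real n * (1/real n))" by (simp add: powr_powr)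
  thus ?thesis using assms by simp
qed

lemma const_bound: "3 powr (1/200) * (8/5) < (1 + sqrt 5) / (2::real)"
proof -
  have "1 + real 200 * (1/100) \<le> (1 + 1/100::real) ^ 200"
    by (rule Bernoulli_inequality) simp
  hence b: "(3::real) \<le> (101/100) ^ 200" by simp
  have "(3::real) powr (1/200) \<le> ((101/100) ^ 200) powr (1/200)"
    by (rule powr_mono2) (use b in auto)
  also have "((101/100::real) ^ 200) powr (1/200) = 101/100"
    using pow_powr_inv[of "101/100" 200] by simp
  finally have c: "(3::real) powr (1/200) \<le> 101/100" .
  have "(279/125::real) < sqrt 5" by (rule real_less_rsqrt) (simp add: power2_eq_square)
  hence "202/125 < (1 + sqrt 5) / (2::real)" by simp
  moreover have "3 powr (1/200) * (8/5) \<le> (101/100) * (8/5::real)" using c by simp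
  ultimately show ?thesis by simp
qed

theorem proposition12p6:
  shows "\<exists>\<delta>::real. \<delta> > 0 \<and> growth_rate (fam_max4 \<delta>) < ereal ((1 + sqrt 5) / 2)"
proof (intro exI conjI)
  define \<delta> :: real where "\<delta> = 1/200"
  show "\<delta> > 0" unfolding \<delta>_def by simp
  define a where "a = (\<lambda>g. real (count_genus (fam_max4 \<delta>) g))"
  define b where "b = (\<lambda>g::nat. ((real g + 1)^3 * 5) powr (1 / real g) * 3 powr \<delta> * (8/5))"
  have ab: "root g (a g) \<le> b g" if g: "1 \<le> g" for g
  proof -
    define B where "B = real (Suc g) * real (Suc g) * (real (Suc g) * 5 * 3 powr (\<delta> * g) * (8/5)^g)"
    have gpos: "0 < g" using g by simp
    have "a g \<le> B" unfolding a_def B_def count_genus_def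
      by (rule card_bound) (simp add: \<delta>_def)
    hence "root g (a g) \<le> root g B" by (rule real_root_le_mono[OF gpos])
    also have "root g B = B powr (1 / real g)"
      by (rule root_powr_inverse[OF gpos]) (simp add: B_def)
    also have "B = ((real g + 1)^3 * 5) * 3 powr (\<delta> * g) * (8/5)^g"
      unfolding B_def by (simp add: power3_eq_cube algebra_simps)
    also have "(((real g + 1)^3 * 5) * 3 powr (\<delta> * g) * (8/5)^g) powr (1 / real g)
        = ((real g + 1)^3 * 5) powr (1 / real g) * (3 powr (\<delta> * g)) powr (1 / real g)
          * ((8/5)^g) powr (1 / real g)"
      by (simp add: powr_mult)
    also have "(3 powr (\<delta> * g)) powr (1 / real g) = (3::real) powr \<delta>"
      using gpos by (simp add: powr_powr)
    also have "((8/5::real)^g) powr (1 / real g) = 8/5"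
    proof -
      have "((8/5::real)^g) = (8/5) powr (real g)" by (simp add: powr_realpow)
      hence "((8/5::real)^g) powr (1 / real g) = (8/5) powr (real g * (1 / real g))"
        by (simp add: powr_powr)
      thus ?thesis using gpos by simp
    qed
    finally show ?thesis unfolding b_def by simp
  qed
  have lim1: "(\<lambda>g::nat. ((real g + 1)^3 * 5) powr (1 / real g)) \<longlonglongrightarrow> 1"
    by real_asymp
  have limb: "b \<longlonglongrightarrow> 1 * 3 powr \<delta> * (8/5)"
    unfolding b_def by (intro tendsto_intros lim1)
  have "growth_rate (fam_max4 \<delta>) = limsup (\<lambda>g. ereal (root g (a g)))"
    unfolding growth_rate_def a_def ..
  also have "\<dots> \<le> limsup (\<lambda>g. ereal (b g))"
    by (rule Limsup_mono) (use ab in \<open>auto simp: eventually_at_top_linorder intro!: exI[of _ 1]\<close>)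
  also have "limsup (\<lambda>g. ereal (b g)) = ereal (1 * 3 powr \<delta> * (8/5))"
    by (rule lim_imp_Limsup) (use limb in auto)
  also have "\<dots> < ereal ((1 + sqrt 5) / 2)"
    using const_bound unfolding \<delta>_def by simp
  finally show "growth_rate (fam_max4 \<delta>) < ereal ((1 + sqrt 5) / 2)" .
qed

end
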